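(* Let $n=2k$ with $k\ge 2$. If $lmd(S_n)=2$, then no local metric basis of $S_n$ has both of its vertices in the same cycle $C_i$, $i\in\{a,b,c,d\}$.
   Context: For $n\ge 3$, $S_n$ is the graph with vertex set $\{a_i,b_i,c_i,d_i : 1\le i\le n\}$ and edge set $\{a_ia_{i+1}, b_ib_{i+1}, c_ic_{i+1}, d_id_{i+1}, a_{i+1}b_i, a_ib_i, b_ic_i, c_id_i : 1\le i\le n\}$, indices taken modulo $n$. For $i\in\{a,b,c,d\}$, $C_i$ is the cycle induced by $i_1,\ldots,i_n$. A vertex $w$ resolves $u,v$ if $d(u,w)\neq d(v,w)$ ($d$ the graph distance). A local resolving set is a vertex set $W$ such that every two adjacent vertices are resolved by some element of $W$; a local metric basis is a local resolving set of minimum cardinality, and $lmd(G)$ is that cardinality. *)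

theory Defs
  imports Main
begin

text \<open>The graph S_n. Vertex (X, i) with X one of the four letters and
  i in {0..<n} stands for X_{i+1}; indices are taken modulo n.\<close>

datatype lbl = LA | LB | LC | LD

type_synonym vertex = "lbl \<times> nat"

definition S_verts :: "nat \<Rightarrow> vertex set" where
  "S_verts n = UNIV \<times> {..<n}"

definition S_edge :: "nat \<Rightarrow> vertex \<Rightarrow> vertex \<Rightarrow> bool" where
  "S_edge n u v \<longleftrightarrow> (\<exists>i<n.
      (\<exists>X. u = (X, i) \<and> v = (X, (i+1) mod n))
    \<or> (u = (LA, (i+1) mod n) \<and> v = (LB, i))
    \<or> (u = (LA, i) \<and> v = (LB, i))
    \<or> (u = (LB, i) \<and> v = (LC, i))
    \<or> (u = (LC, i) \<and> v = (LD, i)))"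

definition S_adj :: "nat \<Rightarrow> vertex \<Rightarrow> vertex \<Rightarrow> bool" where
  "S_adj n u v \<longleftrightarrow> S_edge n u v \<or> S_edge n v u"

inductive walk :: "nat \<Rightarrow> nat \<Rightarrow> vertex \<Rightarrow> vertex \<Rightarrow> bool" for n where
  walk0: "u \<in> S_verts n \<Longrightarrow> walk n 0 u u"
| walkS: "S_adj n u v \<Longrightarrow> walk n k v w \<Longrightarrow> walk n (Suc k) u w"

text \<open>Graph distance (S_n is connected, so this is the length of a shortest path).\<close>
definition S_dist :: "nat \<Rightarrow> vertex \<Rightarrow> vertex \<Rightarrow> nat" where
  "S_dist n u v = (LEAST k. walk n k u v)"

definition resolves :: "nat \<Rightarrow> vertex \<Rightarrow> vertex \<Rightarrow> vertex \<Rightarrow> bool" where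
  "resolves n w u v \<longleftrightarrow> S_dist n u w \<noteq> S_dist n v w"

definition local_resolving :: "nat \<Rightarrow> vertex set \<Rightarrow> bool" where
  "local_resolving n W \<longleftrightarrow> W \<subseteq> S_verts n \<and>
     (\<forall>u\<in>S_verts n. \<forall>v\<in>S_verts n. S_adj n u v \<longrightarrow> (\<exists>w\<in>W. resolves n w u v))"

definition lmd :: "nat \<Rightarrow> nat" where
  "lmd n = (LEAST m. \<exists>W. local_resolving n W \<and> card W = m)"

definition local_metric_basis :: "nat \<Rightarrow> vertex set \<Rightarrow> bool" where
  "local_metric_basis n W \<longleftrightarrow> local_resolving n W \<and> card W = lmd n"

definition cycle_verts :: "nat \<Rightarrow> lbl \<Rightarrow> vertex set" where
  "cycle_verts n X = {X} \<times> {..<n}"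

end

theory Submission
  imports Defs
begin
definition sc :: "nat \<Rightarrow> nat \<Rightarrow> nat" where "sc n i = (if Suc i = n then 0 else Suc i)"
definition pr :: "nat \<Rightarrow> nat \<Rightarrow> nat" where "pr n i = (if i = 0 then n - 1 else i - 1)"
definition fw :: "nat \<Rightarrow> nat \<Rightarrow> nat \<Rightarrow> nat" where "fw n i j = (if j \<le> i then i - j else i + n - j)"
definition cd :: "nat \<Rightarrow> nat \<Rightarrow> nat \<Rightarrow> nat" where "cd n i j = min (fw n i j) (n - fw n i j)"

lemma fw_lt: "i < n \<Longrightarrow> j < n \<Longrightarrow> fw n i j < n" unfolding fw_def by auto
lemma fw_sc: "i < n \<Longrightarrow> j < n \<Longrightarrow> fw n (sc n i) j = (if Suc (fw n i j) = n then 0 else Suc (fw n i j))"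
  unfolding fw_def sc_def by auto
lemma fw_pr: "i < n \<Longrightarrow> j < n \<Longrightarrow> fw n (pr n i) j = (if fw n i j = 0 then n - 1 else fw n i j - 1)"
  unfolding fw_def pr_def by auto
lemma fw0: "i < n \<Longrightarrow> j < n \<Longrightarrow> fw n i j = 0 \<longleftrightarrow> i = j"
  unfolding fw_def by auto

lemma Lf: "f < (n::nat) \<Longrightarrow> min (if Suc f = n then 0 else Suc f) (n - (if Suc f = n then 0 else Suc f)) \<le> min f (n-f) + 1
   \<and> min f (n-f) \<le> min (if Suc f = n then 0 else Suc f) (n - (if Suc f = n then 0 else Suc f)) + 1"
  by (cases "Suc f = n"; simp add: min_def; arith)
lemma Sf: "f < (n::nat) \<Longrightarrow> f \<noteq> 0 \<Longrightarrow> min (if Suc f = n then 0 else Suc f) (n - (if Suc f = n then 0 else Suc f)) + 1 = min f (n-f)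
   \<or> min (f - 1) (n - (f - 1)) + 1 = min f (n-f)"
  by (cases "Suc f = n"; simp add: min_def; arith)

lemma L1: "i < n \<Longrightarrow> j < n \<Longrightarrow> cd n (sc n i) j \<le> cd n i j + 1 \<and> cd n i j \<le> cd n (sc n i) j + 1"
  unfolding cd_def using Lf[OF fw_lt] fw_sc by simp
lemma step: "i < n \<Longrightarrow> j < n \<Longrightarrow> i \<noteq> j \<Longrightarrow> cd n (sc n i) j + 1 = cd n i j \<or> cd n (pr n i) j + 1 = cd n i j"
  unfolding cd_def using Sf[OF fw_lt] fw_sc fw_pr fw0 by simp
lemma cd0: "i < n \<Longrightarrow> j < n \<Longrightarrow> cd n i j = 0 \<longleftrightarrow> i = j"
proof -
  assume a: "i < n" "j < n"
  have "fw n i j < n" using fw_lt[OF a] .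
  then have "min (fw n i j) (n - fw n i j) = 0 \<longleftrightarrow> fw n i j = 0" by (simp add: min_def)
  then show ?thesis unfolding cd_def using fw0[OF a] by simp
qed

lemma sc_mod: "i < n \<Longrightarrow> Suc i mod n = sc n i"
  unfolding sc_def by (cases "Suc i = n") simp_all
lemma sc_lt: "i < n \<Longrightarrow> sc n i < n" by (auto simp: sc_def)
lemma pr_lt: "i < n \<Longrightarrow> pr n i < n" by (auto simp: pr_def)
lemma sc_pr: "i < n \<Longrightarrow> sc n (pr n i) = i" by (auto simp: sc_def pr_def)
lemma pr_sc: "i < n \<Longrightarrow> pr n (sc n i) = i" by (auto simp: sc_def pr_def)

lemma edge_verts: "S_edge n u v \<Longrightarrow> u \<in> S_verts n \<and> v \<in> S_verts n"
  unfolding S_edge_def S_verts_def by auto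
lemma adj_verts: "S_adj n u v \<Longrightarrow> u \<in> S_verts n \<and> v \<in> S_verts n"
  unfolding S_adj_def using edge_verts by blast

lemma walk_lower:
  assumes "walk n k v w" and lip: "\<And>u v. S_edge n u v \<Longrightarrow> f u \<le> f v + 1 \<and> f v \<le> f u + 1"
  shows "f v \<le> k + f w"
  using assms(1)
proof (induction rule: walk.induct)
  case (walk0 u) then show ?case by simp
next
  case (walkS u v k w)
  have "f u \<le> f v + 1" using walkS(1) lip unfolding S_adj_def by blast
  then show ?case using walkS by simp
qed

lemma walk_upper:
  assumes w: "w \<in> S_verts n"
    and zero: "\<And>v. v \<in> S_verts n \<Longrightarrow> f v = 0 \<Longrightarrow> v = w"
    and desc: "\<And>v. v \<in> S_verts n \<Longrightarrow> f v > 0 \<Longrightarrow> \<exists>u. S_adj n v u \<and> f u + 1 = f v"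
  shows "v \<in> S_verts n \<Longrightarrow> walk n (f v) v w"
proof (induction "f v" arbitrary: v)
  case 0
  then have "v = w" using zero by simp
  then show ?case using "0" by (metis walk0)
next
  case (Suc m)
  then obtain u where u: "S_adj n v u" "f u + 1 = f v" using desc by (metis zero_less_Suc)
  have "u \<in> S_verts n" using u adj_verts by blast
  then have "walk n (f u) u w" using Suc u by simp
  then show ?case using u Suc(2) by (metis Suc_eq_plus1 walkS)
qed

lemma dist_char:
  assumes w: "w \<in> S_verts n" and fw0: "f w = 0"
    and lip: "\<And>u v. S_edge n u v \<Longrightarrow> f u \<le> f v + 1 \<and> f v \<le> f u + 1"
    and zero: "\<And>v. v \<in> S_verts n \<Longrightarrow> f v = 0 \<Longrightarrow> v = w"
    and desc: "\<And>v. v \<in> S_verts n \<Longrightarrow> f v > 0 \<Longrightarrow> \<exists>u. S_adj n v u \<and> f u + 1 = f v"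
    and v: "v \<in> S_verts n"
  shows "S_dist n v w = f v"
  unfolding S_dist_def
proof (rule Least_equality)
  show "walk n (f v) v w" using walk_upper[OF w zero desc v] by blast
next
  fix y assume "walk n y v w"
  then show "f v \<le> y" using walk_lower[OF _ lip] fw0 by fastforce
qed


definition phiA :: "nat \<Rightarrow> nat \<Rightarrow> vertex \<Rightarrow> nat" where
  "phiA n j v = (case v of (LA,i) \<Rightarrow> cd n i j
     | (LB,i) \<Rightarrow> 1 + min (cd n i j) (cd n (sc n i) j)
     | (LC,i) \<Rightarrow> 2 + min (cd n i j) (cd n (sc n i) j)
     | (LD,i) \<Rightarrow> 3 + min (cd n i j) (cd n (sc n i) j))"

definition phiO :: "nat \<Rightarrow> nat \<Rightarrow> nat \<Rightarrow> vertex \<Rightarrow> nat" where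
  "phiO n t j v = (case v of (LA,i) \<Rightarrow> 1 + t + min (cd n i j) (cd n (pr n i) j)
     | (LB,i) \<Rightarrow> t + cd n i j
     | (LC,i) \<Rightarrow> cd n i j + (if t = 1 then 0 else 1)
     | (LD,i) \<Rightarrow> cd n i j + (2 - t))"

lemma e_cyc: assumes "i < n" shows "S_adj n (X,i) (X, sc n i) \<and> S_adj n (X, sc n i) (X,i)"
proof -
  have "S_edge n (X,i) (X, sc n i)" unfolding S_edge_def
    by (rule exI[of _ i]) (simp add: assms sc_mod[OF assms])
  then show ?thesis unfolding S_adj_def by simp
qed
lemma e_ab: assumes "i < n" shows "S_adj n (LA,i) (LB,i) \<and> S_adj n (LB,i) (LA,i)"
proof -
  have "S_edge n (LA,i) (LB, i)" unfolding S_edge_def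
    by (rule exI[of _ i]) (simp add: assms)
  then show ?thesis unfolding S_adj_def by simp
qed
lemma e_ab2: assumes "i < n" shows "S_adj n (LA,sc n i) (LB,i) \<and> S_adj n (LB,i) (LA,sc n i)"
proof -
  have "S_edge n (LA,sc n i) (LB, i)" unfolding S_edge_def
    by (rule exI[of _ i]) (simp add: assms sc_mod[OF assms])
  then show ?thesis unfolding S_adj_def by simp
qed
lemma e_bc: assumes "i < n" shows "S_adj n (LB,i) (LC,i) \<and> S_adj n (LC,i) (LB,i)"
proof -
  have "S_edge n (LB,i) (LC, i)" unfolding S_edge_def
    by (rule exI[of _ i]) (simp add: assms)
  then show ?thesis unfolding S_adj_def by simp
qed
lemma e_cd: assumes "i < n" shows "S_adj n (LC,i) (LD,i) \<and> S_adj n (LD,i) (LC,i)"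
proof -
  have "S_edge n (LC,i) (LD, i)" unfolding S_edge_def
    by (rule exI[of _ i]) (simp add: assms)
  then show ?thesis unfolding S_adj_def by simp
qed

lemma edge_cases:
  assumes "S_edge n u v"
  obtains i X where "i < n" "u = (X,i)" "v = (X, sc n i)"
  | i where "i < n" "u = (LA, sc n i)" "v = (LB,i)"
  | i where "i < n" "u = (LA, i)" "v = (LB,i)"
  | i where "i < n" "u = (LB, i)" "v = (LC,i)"
  | i where "i < n" "u = (LC, i)" "v = (LD,i)"
proof -
  obtain i where i: "i < n" and c: "(\<exists>X. u = (X, i) \<and> v = (X, (i+1) mod n))
    \<or> (u = (LA, (i+1) mod n) \<and> v = (LB, i))
    \<or> (u = (LA, i) \<and> v = (LB, i))
    \<or> (u = (LB, i) \<and> v = (LC, i))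
    \<or> (u = (LC, i) \<and> v = (LD, i))" using assms unfolding S_edge_def by blast
  have m: "(i+1) mod n = sc n i" using sc_mod[OF i] by simp
  from c show ?thesis
  proof (elim disjE exE conjE)
    fix X assume "u = (X,i)" "v = (X, (i+1) mod n)"
    then show ?thesis using that(1)[OF i] m by simp
  next
    assume "u = (LA, (i+1) mod n)" "v = (LB, i)"
    then show ?thesis using that(2)[OF i] m by simp
  next
    assume "u = (LA, i)" "v = (LB, i)" then show ?thesis using that(3)[OF i] by simp
  next
    assume "u = (LB, i)" "v = (LC, i)" then show ?thesis using that(4)[OF i] by simp
  next
    assume "u = (LC, i)" "v = (LD, i)" then show ?thesis using that(5)[OF i] by simp
  qed
qed

lemma lipA:
  assumes "S_edge n u v" "j < n"
  shows "phiA n j u \<le> phiA n j v + 1 \<and> phiA n j v \<le> phiA n j u + 1"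
  using assms(1)
proof (cases rule: edge_cases)
  case (1 i X)
  have a: "cd n (sc n i) j \<le> cd n i j + 1 \<and> cd n i j \<le> cd n (sc n i) j + 1" using L1[OF 1(1) assms(2)] by simp
  have b: "cd n (sc n (sc n i)) j \<le> cd n (sc n i) j + 1 \<and> cd n (sc n i) j \<le> cd n (sc n (sc n i)) j + 1"
    using L1[OF sc_lt[OF 1(1)] assms(2)] by simp
  show ?thesis using 1 a b by (cases X) (simp_all add: phiA_def min_def)
next
  case (2 i)
  have a: "cd n (sc n i) j \<le> cd n i j + 1 \<and> cd n i j \<le> cd n (sc n i) j + 1" using L1[OF 2(1) assms(2)] by simp
  show ?thesis using 2 a by (simp add: phiA_def min_def)
next
  case (3 i)
  have a: "cd n (sc n i) j \<le> cd n i j + 1 \<and> cd n i j \<le> cd n (sc n i) j + 1" using L1[OF 3(1) assms(2)] by simp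
  show ?thesis using 3 a by (simp add: phiA_def min_def)
qed (simp_all add: phiA_def)

lemma lipO:
  assumes "S_edge n u v" "j < n" "t \<le> 2"
  shows "phiO n t j u \<le> phiO n t j v + 1 \<and> phiO n t j v \<le> phiO n t j u + 1"
  using assms(1)
proof (cases rule: edge_cases)
  case (1 i X)
  have a: "cd n (sc n i) j \<le> cd n i j + 1 \<and> cd n i j \<le> cd n (sc n i) j + 1" using L1[OF 1(1) assms(2)] by simp
  have b: "cd n i j \<le> cd n (pr n i) j + 1 \<and> cd n (pr n i) j \<le> cd n i j + 1"
    using L1[OF pr_lt[OF 1(1)] assms(2)] sc_pr[OF 1(1)] by simp
  show ?thesis
  proof (cases X)
    case LA then show ?thesis using 1 a b by (simp add: phiO_def min_def pr_sc split: if_splits)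
  next
    case LB then show ?thesis using 1 a b by (simp add: phiO_def)
  next
    case LC then show ?thesis using 1 a b by (simp add: phiO_def)
  next
    case LD
    have "t = 0 \<or> t = 1 \<or> t = 2" using assms(3) by arith
    then show ?thesis using 1 a LD by (elim disjE) (simp_all add: phiO_def)
  qed
next
  case (2 i)
  have a: "cd n (sc n i) j \<le> cd n i j + 1 \<and> cd n i j \<le> cd n (sc n i) j + 1" using L1[OF 2(1) assms(2)] by simp
  show ?thesis using 2 a by (simp add: phiO_def min_def pr_sc)
next
  case (3 i)
  have b: "cd n i j \<le> cd n (pr n i) j + 1 \<and> cd n (pr n i) j \<le> cd n i j + 1"
    using L1[OF pr_lt[OF 3(1)] assms(2)] sc_pr[OF 3(1)] by simp
  show ?thesis using 3 b by (simp add: phiO_def min_def)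
next
  case (4 i) then show ?thesis using assms(3) by (simp add: phiO_def)
next
  case (5 i)
  have "t = 0 \<or> t = 1 \<or> t = 2" using assms(3) by arith
  then show ?thesis using 5 by (elim disjE) (simp_all add: phiO_def)
qed


lemma verts_cases: assumes "v \<in> S_verts n" obtains Y i where "v = (Y,i)" "i < n"
  using assms unfolding S_verts_def by auto

lemma cyc_step:
  assumes "i < n" "j < n" "i \<noteq> j"
  shows "\<exists>i'. S_adj n (X,i) (X,i') \<and> i' < n \<and> cd n i' j + 1 = cd n i j"
proof -
  from step[OF assms] show ?thesis
  proof
    assume "cd n (sc n i) j + 1 = cd n i j"
    then show ?thesis using e_cyc[OF assms(1)] sc_lt[OF assms(1)] by blast
  next
    assume h: "cd n (pr n i) j + 1 = cd n i j"
    have "S_adj n (X, pr n i) (X, i)" using e_cyc[OF pr_lt[OF assms(1)], of X] sc_pr[OF assms(1)] by simp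
    then have "S_adj n (X, i) (X, pr n i)" unfolding S_adj_def by blast
    then show ?thesis using h pr_lt[OF assms(1)] by blast
  qed
qed

lemma descA:
  assumes j: "j < n" and v: "v \<in> S_verts n" and pos: "phiA n j v > 0"
  shows "\<exists>u. S_adj n v u \<and> phiA n j u + 1 = phiA n j v"
proof -
  obtain Y i where vi: "v = (Y,i)" "i < n" using v by (rule verts_cases)
  show ?thesis
  proof (cases Y)
    case LA
    then have "i \<noteq> j" using pos vi cd0[OF vi(2) j] by (simp add: phiA_def)
    then obtain i' where "S_adj n (LA,i) (LA,i')" "i' < n" "cd n i' j + 1 = cd n i j"
      using cyc_step[OF vi(2) j] by blast
    then show ?thesis using vi LA by (intro exI[of _ "(LA,i')"]) (simp add: phiA_def)
  next
    case LB
    show ?thesis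
    proof (cases "cd n i j \<le> cd n (sc n i) j")
      case True
      then show ?thesis using vi LB e_ab[OF vi(2)] by (intro exI[of _ "(LA,i)"]) (simp add: phiA_def min_def)
    next
      case False
      then show ?thesis using vi LB e_ab2[OF vi(2)] by (intro exI[of _ "(LA,sc n i)"]) (simp add: phiA_def min_def)
    qed
  next
    case LC
    then show ?thesis using vi e_bc[OF vi(2)] by (intro exI[of _ "(LB,i)"]) (simp add: phiA_def)
  next
    case LD
    then show ?thesis using vi e_cd[OF vi(2)] by (intro exI[of _ "(LC,i)"]) (simp add: phiA_def)
  qed
qed

lemma descO:
  assumes j: "j < n" and t: "t \<le> 2" and v: "v \<in> S_verts n" and pos: "phiO n t j v > 0"
  shows "\<exists>u. S_adj n v u \<and> phiO n t j u + 1 = phiO n t j v"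
proof -
  obtain Y i where vi: "v = (Y,i)" "i < n" using v by (rule verts_cases)
  have t3: "t = 0 \<or> t = 1 \<or> t = 2" using t by arith
  show ?thesis
  proof (cases Y)
    case LA
    show ?thesis
    proof (cases "cd n i j \<le> cd n (pr n i) j")
      case True
      then show ?thesis using vi LA e_ab[OF vi(2)] by (intro exI[of _ "(LB,i)"]) (simp add: phiO_def min_def)
    next
      case False
      have "S_adj n (LA,i) (LB, pr n i)" using e_ab2[OF pr_lt[OF vi(2)]] sc_pr[OF vi(2)] by simp
      then show ?thesis using vi LA False by (intro exI[of _ "(LB,pr n i)"]) (simp add: phiO_def min_def)
    qed
  next
    case LB
    show ?thesis
    proof (cases "t = 0")
      case True
      then have "i \<noteq> j" using pos vi LB cd0[OF vi(2) j] by (simp add: phiO_def)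
      then obtain i' where "S_adj n (LB,i) (LB,i')" "i' < n" "cd n i' j + 1 = cd n i j"
        using cyc_step[OF vi(2) j] by blast
      then show ?thesis using vi LB True by (intro exI[of _ "(LB,i')"]) (simp add: phiO_def)
    next
      case False
      then show ?thesis using vi LB e_bc[OF vi(2)] t3 by (intro exI[of _ "(LC,i)"]) (auto simp add: phiO_def)
    qed
  next
    case LC
    show ?thesis
    proof (cases "t = 1")
      case True
      then have "i \<noteq> j" using pos vi LC cd0[OF vi(2) j] by (simp add: phiO_def)
      then obtain i' where "S_adj n (LC,i) (LC,i')" "i' < n" "cd n i' j + 1 = cd n i j"
        using cyc_step[OF vi(2) j] by blast
      then show ?thesis using vi LC True by (intro exI[of _ "(LC,i')"]) (simp add: phiO_def)
    next
      case False
      then have "t = 0 \<or> t = 2" using t3 by simp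
      then show ?thesis
      proof
        assume "t = 0"
        then show ?thesis using vi LC e_bc[OF vi(2)] by (intro exI[of _ "(LB,i)"]) (simp add: phiO_def)
      next
        assume "t = 2"
        then show ?thesis using vi LC e_cd[OF vi(2)] by (intro exI[of _ "(LD,i)"]) (simp add: phiO_def)
      qed
    qed
  next
    case LD
    show ?thesis
    proof (cases "t = 2")
      case True
      then have "i \<noteq> j" using pos vi LD cd0[OF vi(2) j] by (simp add: phiO_def)
      then obtain i' where "S_adj n (LD,i) (LD,i')" "i' < n" "cd n i' j + 1 = cd n i j"
        using cyc_step[OF vi(2) j] by blast
      then show ?thesis using vi LD True by (intro exI[of _ "(LD,i')"]) (simp add: phiO_def)
    next
      case False
      then have "t = 0 \<or> t = 1" using t3 by simp
      then show ?thesis using vi LD e_cd[OF vi(2)] by (intro exI[of _ "(LC,i)"]) (auto simp add: phiO_def)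
    qed
  qed
qed

definition lay :: "nat \<Rightarrow> lbl" where "lay t = (if t = 0 then LB else if t = 1 then LC else LD)"

lemma zeroA: "j < n \<Longrightarrow> v \<in> S_verts n \<Longrightarrow> phiA n j v = 0 \<Longrightarrow> v = (LA,j)"
  by (erule verts_cases) (auto simp: phiA_def cd0 split: lbl.splits)

lemma zeroO: "j < n \<Longrightarrow> t \<le> 2 \<Longrightarrow> v \<in> S_verts n \<Longrightarrow> phiO n t j v = 0 \<Longrightarrow> v = (lay t, j)"
proof -
  assume a: "j < n" "t \<le> 2" "v \<in> S_verts n" "phiO n t j v = 0"
  have t3: "t = 0 \<or> t = 1 \<or> t = 2" using a(2) by arith
  obtain Y i where vi: "v = (Y,i)" "i < n" using a(3) by (rule verts_cases)
  show ?thesis using t3 a(4) vi cd0[OF vi(2) a(1)] by (cases Y) (auto simp: phiO_def lay_def)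
qed

lemma distA: assumes "j < n" "v \<in> S_verts n" shows "S_dist n v (LA,j) = phiA n j v"
proof (rule dist_char)
  show "(LA,j) \<in> S_verts n" using assms unfolding S_verts_def by simp
  show "phiA n j (LA, j) = 0" by (simp add: phiA_def cd0[OF assms(1) assms(1)])
qed (use assms lipA zeroA descA in auto)

lemma distO: assumes "j < n" "t \<le> 2" "v \<in> S_verts n" shows "S_dist n v (lay t,j) = phiO n t j v"
proof (rule dist_char)
  show "(lay t,j) \<in> S_verts n" using assms unfolding S_verts_def by simp
  show "phiO n t j (lay t, j) = 0" using assms(2) by (simp add: phiO_def lay_def cd0[OF assms(1) assms(1)])
qed (use assms lipO zeroO descO in auto)


lemma fw_swap: "i < n \<Longrightarrow> j < n \<Longrightarrow> i \<noteq> j \<Longrightarrow> fw n j i = n - fw n i j"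
  unfolding fw_def by auto
lemma fw_self: "fw n i i = 0" unfolding fw_def by simp
lemma cdv: "fw n i j = f \<Longrightarrow> cd n i j = min f (n - f)" unfolding cd_def by simp

lemma facts:
  assumes n: "n = 2*k" and k: "k \<ge> 2" and j1: "j1 < n" and j2: "j2 < n"
    and m1: "1 \<le> fw n j2 j1" and mk: "fw n j2 j1 \<le> k"
  shows "cd n j1 j1 = 0" "cd n j2 j2 = 0"
    "cd n j2 j1 = fw n j2 j1" "cd n j1 j2 = fw n j2 j1"
    "cd n (pr n j1) j1 = 1" "cd n (sc n j1) j1 = 1"
    "cd n (sc n j2) j2 = 1" "cd n (pr n j2) j2 = 1"
    "fw n j2 j1 < k \<Longrightarrow> cd n (pr n j1) j2 = fw n j2 j1 + 1"
    "fw n j2 j1 < k \<Longrightarrow> cd n (sc n j2) j1 = fw n j2 j1 + 1"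
    "fw n j2 j1 = k \<Longrightarrow> cd n (pr n j1) j2 = k - 1"
    "fw n j2 j1 = k \<Longrightarrow> cd n (sc n j1) j2 = k - 1"
    "fw n j2 j1 = k \<Longrightarrow> cd n (pr n j2) j1 = k - 1"
    "fw n j2 j1 = k \<Longrightarrow> cd n (sc n j2) j1 = k - 1"
proof -
  define m where "m = fw n j2 j1"
  have ne: "j1 \<noteq> j2" using m1 fw_self by (metis not_one_le_zero)
  have f12: "fw n j1 j2 = n - m" using fw_swap[OF j2 j1] ne m_def by simp
  have f11: "fw n j1 j1 = 0" "fw n j2 j2 = 0" by (simp_all add: fw_self)
  show "cd n j1 j1 = 0" "cd n j2 j2 = 0" using cd0 j1 j2 by simp_all
  show "cd n j2 j1 = fw n j2 j1" using cdv[OF m_def[symmetric]] m_def n mk by simp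
  show "cd n j1 j2 = fw n j2 j1" using cdv[OF f12] m_def n mk by simp
  show "cd n (pr n j1) j1 = 1" using cdv[OF fw_pr[OF j1 j1]] f11 n k by simp
  show "cd n (pr n j2) j2 = 1" using cdv[OF fw_pr[OF j2 j2]] f11 n k by simp
  show "cd n (sc n j1) j1 = 1" using cdv[OF fw_sc[OF j1 j1]] f11 n k by simp
  show "cd n (sc n j2) j2 = 1" using cdv[OF fw_sc[OF j2 j2]] f11 n k by simp
  show "fw n j2 j1 < k \<Longrightarrow> cd n (pr n j1) j2 = fw n j2 j1 + 1"
    using cdv[OF fw_pr[OF j1 j2]] f12 n k m_def mk m1 by (simp add: min_def, arith)
  show "fw n j2 j1 < k \<Longrightarrow> cd n (sc n j2) j1 = fw n j2 j1 + 1"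
    using cdv[OF fw_sc[OF j2 j1]] n k m_def mk m1 by (simp add: min_def)
  show "fw n j2 j1 = k \<Longrightarrow> cd n (pr n j1) j2 = k - 1"
    using cdv[OF fw_pr[OF j1 j2]] f12 n k m_def by (simp add: min_def)
  show "fw n j2 j1 = k \<Longrightarrow> cd n (sc n j1) j2 = k - 1"
    using cdv[OF fw_sc[OF j1 j2]] f12 n k m_def by (simp add: min_def)
  show "fw n j2 j1 = k \<Longrightarrow> cd n (pr n j2) j1 = k - 1"
    using cdv[OF fw_pr[OF j2 j1]] n k m_def by (simp add: min_def)
  show "fw n j2 j1 = k \<Longrightarrow> cd n (sc n j2) j1 = k - 1"
    using cdv[OF fw_sc[OF j2 j1]] n k m_def by (simp add: min_def)
qed


lemma vin: "i < n \<Longrightarrow> (X,i) \<in> S_verts n" unfolding S_verts_def by simp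

lemma keyO:
  assumes n: "n = 2*k" and k: "k \<ge> 2" and j1: "j1 < n" and j2: "j2 < n"
    and m1: "1 \<le> fw n j2 j1" and mk: "fw n j2 j1 \<le> k" and t: "t \<le> 2"
  shows "\<exists>u v. u \<in> S_verts n \<and> v \<in> S_verts n \<and> S_adj n u v \<and>
     phiO n t j1 u = phiO n t j1 v \<and> phiO n t j2 u = phiO n t j2 v"
proof (cases "fw n j2 j1 < k")
  case True
  note F = facts[OF n k j1 j2 m1 mk]
  have adj: "S_adj n (LA, j1) (LB, pr n j1)" using e_ab2[OF pr_lt[OF j1]] sc_pr[OF j1] by simp
  show ?thesis
    apply (rule exI[of _ "(LA,j1)"], rule exI[of _ "(LB, pr n j1)"])
    using adj vin[OF j1] vin[OF pr_lt[OF j1]] F(1-8) F(9)[OF True] True by (simp add: phiO_def)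
next
  case False
  then have mk': "fw n j2 j1 = k" using mk by simp
  note F = facts[OF n k j1 j2 m1 mk]
  have adj: "S_adj n (LA, j1) (LA, sc n j1)" using e_cyc[OF j1] by simp
  show ?thesis
    apply (rule exI[of _ "(LA,j1)"], rule exI[of _ "(LA, sc n j1)"])
    using adj vin[OF j1] vin[OF sc_lt[OF j1]] F(1-8) F(11-14)[OF mk'] mk' k pr_sc[OF j1]
    by (simp add: phiO_def)
qed

lemma keyA:
  assumes n: "n = 2*k" and k: "k \<ge> 2" and j1: "j1 < n" and j2: "j2 < n"
    and m1: "1 \<le> fw n j2 j1" and mk: "fw n j2 j1 \<le> k"
  shows "\<exists>u v. u \<in> S_verts n \<and> v \<in> S_verts n \<and> S_adj n u v \<and>
     phiA n j1 u = phiA n j1 v \<and> phiA n j2 u = phiA n j2 v"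
proof (cases "fw n j2 j1 < k")
  case True
  note F = facts[OF n k j1 j2 m1 mk]
  have adj: "S_adj n (LA, sc n j2) (LB, j2)" using e_ab2[OF j2] by simp
  show ?thesis
    apply (rule exI[of _ "(LA,sc n j2)"], rule exI[of _ "(LB, j2)"])
    using adj vin[OF j2] vin[OF sc_lt[OF j2]] F(1-8) F(10)[OF True] True by (simp add: phiA_def)
next
  case False
  then have mk': "fw n j2 j1 = k" using mk by simp
  note F = facts[OF n k j1 j2 m1 mk]
  have adj: "S_adj n (LB, pr n j2) (LB, j2)" using e_cyc[OF pr_lt[OF j2]] sc_pr[OF j2] by simp
  show ?thesis
    apply (rule exI[of _ "(LB,pr n j2)"], rule exI[of _ "(LB, j2)"])
    using adj vin[OF j2] vin[OF pr_lt[OF j2]] F(1-8) F(11-14)[OF mk'] mk' k sc_pr[OF j2]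
    by (simp add: phiA_def)
qed


lemma key_dist:
  assumes n: "n = 2*k" and k: "k \<ge> 2" and j1: "j1 < n" and j2: "j2 < n"
    and m1: "1 \<le> fw n j2 j1" and mk: "fw n j2 j1 \<le> k"
  shows "\<exists>u v. u \<in> S_verts n \<and> v \<in> S_verts n \<and> S_adj n u v \<and>
     S_dist n u (X,j1) = S_dist n v (X,j1) \<and> S_dist n u (X,j2) = S_dist n v (X,j2)"
proof (cases "X = LA")
  case True
  obtain u v where "u \<in> S_verts n" "v \<in> S_verts n" "S_adj n u v"
     "phiA n j1 u = phiA n j1 v" "phiA n j2 u = phiA n j2 v"
    using keyA[OF n k j1 j2 m1 mk] by blast
  then show ?thesis using True distA[OF j1] distA[OF j2] by metis
next
  case False
  define t where "t = (if X = LB then 0 else if X = LC then 1 else (2::nat))"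
  have t2: "t \<le> 2" unfolding t_def by simp
  have X: "X = lay t" using False unfolding t_def lay_def by (cases X) auto
  obtain u v where "u \<in> S_verts n" "v \<in> S_verts n" "S_adj n u v"
     "phiO n t j1 u = phiO n t j1 v" "phiO n t j2 u = phiO n t j2 v"
    using keyO[OF n k j1 j2 m1 mk t2] by blast
  then show ?thesis using X distO[OF j1 t2] distO[OF j2 t2] by metis
qed

theorem lemma3p3:
  fixes n k :: nat
  assumes "n = 2 * k" and "k \<ge> 2" and "lmd n = 2"
  shows "\<not> (\<exists>W X. local_metric_basis n W \<and> W \<subseteq> cycle_verts n X)"
proof
  assume "\<exists>W X. local_metric_basis n W \<and> W \<subseteq> cycle_verts n X"
  then obtain W X where B: "local_metric_basis n W" and sub: "W \<subseteq> cycle_verts n X" by blast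
  have LR: "local_resolving n W" and c: "card W = 2" using B assms(3) unfolding local_metric_basis_def by auto
  obtain x y where W: "W = {x,y}" and xy: "x \<noteq> y" using c by (meson card_2_iff)
  obtain j1 where x: "x = (X,j1)" "j1 < n" using sub W unfolding cycle_verts_def by auto
  obtain j2 where y: "y = (X,j2)" "j2 < n" using sub W unfolding cycle_verts_def by auto
  have ne: "j1 \<noteq> j2" using xy x y by simp
  have ex: "\<exists>u v. u \<in> S_verts n \<and> v \<in> S_verts n \<and> S_adj n u v \<and>
     S_dist n u (X,j1) = S_dist n v (X,j1) \<and> S_dist n u (X,j2) = S_dist n v (X,j2)"
  proof (cases "fw n j2 j1 \<le> k")
    case True
    have "1 \<le> fw n j2 j1" using fw0[OF y(2) x(2)] ne by simp
    then show ?thesis using key_dist[OF assms(1,2) x(2) y(2) _ True] by blast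
  next
    case False
    have sw: "fw n j1 j2 = n - fw n j2 j1" using fw_swap[OF y(2) x(2)] ne by simp
    have "fw n j2 j1 < n" using fw_lt[OF y(2) x(2)] .
    then have a: "1 \<le> fw n j1 j2" "fw n j1 j2 \<le> k" using sw False assms(1) by simp_all
    show ?thesis using key_dist[OF assms(1,2) y(2) x(2) a] by blast
  qed
  then obtain u v where uv: "u \<in> S_verts n" "v \<in> S_verts n" "S_adj n u v"
     "S_dist n u (X,j1) = S_dist n v (X,j1)" "S_dist n u (X,j2) = S_dist n v (X,j2)" by blast
  then obtain w where "w \<in> W" "resolves n w u v" using LR unfolding local_resolving_def by blast
  then show False using W x y uv unfolding resolves_def by auto
qed

end
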